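(* Let $\alpha,b,\beta>0$ with $\alpha<\frac d2$, and let $x_1,\dots,x_n\in\mathbb{R}^d$ span $\mathbb{R}^d$ and satisfy, for every subspace $L\subset\mathbb{R}^d$ of dimension $1\le d_L<d$, $$\frac{|\{i: x_i\in L\}|}{n}<\frac{d_L}{d-2\alpha}.$$ Then the Kotz log-likelihood $\mathcal{L}(S)=-\frac n2\log\det S+\sum_{i=1}^n\log\varphi(x_i^TS^{-1}x_i)$ with $\varphi(t)=t^{\alpha-d/2}\exp(-(t/b)^\beta)$ attains its maximum over $S\in\mathbb{P}_d$.
   Context: $\mathbb{P}_d$ denotes $d\times d$ real symmetric positive definite matrices. *)

theory Defs
  imports "HOL-Analysis.Analysis"
begin

text \<open>Symmetric positive definite d x d real matrices (the cone P_d); d = CARD('d).\<close>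
definition spd :: "real^'d^'d \<Rightarrow> bool" where
  "spd S \<longleftrightarrow> transpose S = S \<and> (\<forall>x::real^'d. x \<noteq> 0 \<longrightarrow> 0 < x \<bullet> (S *v x))"

definition kotz_phi :: "real \<Rightarrow> real \<Rightarrow> real \<Rightarrow> real \<Rightarrow> real \<Rightarrow> real" where
  "kotz_phi d \<alpha> b \<beta> t = t powr (\<alpha> - d / 2) * exp (- ((t / b) powr \<beta>))"

definition kotz_loglik ::
  "real \<Rightarrow> real \<Rightarrow> real \<Rightarrow> nat \<Rightarrow> (nat \<Rightarrow> real^'d) \<Rightarrow> real^'d^'d \<Rightarrow> real" where
  "kotz_loglik \<alpha> b \<beta> n x S =
     - (real n / 2) * ln (det S)
     + (\<Sum>i<n. ln (kotz_phi (real CARD('d)) \<alpha> b \<beta> (x i \<bullet> (matrix_inv S *v x i))))"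

end

theory Submission
  imports Defs
begin

lemma qf_sym:
  fixes P :: "real^'d^'d"
  assumes "transpose P = P"
  shows "y \<bullet> (P *v z) = z \<bullet> (P *v y)"
proof -
  have "y \<bullet> (P *v z) = (y v* P) \<bullet> z" by (simp add: dot_lmul_matrix)
  also have "y v* P = P *v y"
    using vector_transpose_matrix[of y "transpose P"] assms by simp
  finally show ?thesis by (simp add: inner_commute)
qed

lemma qf_expand:
  fixes P :: "real^'d^'d"
  assumes "transpose P = P"
  shows "(y + s *\<^sub>R z) \<bullet> (P *v (y + s *\<^sub>R z)) =
     y \<bullet> (P *v y) + 2 * s * (y \<bullet> (P *v z)) + s^2 * (z \<bullet> (P *v z))"
  using qf_sym[OF assms, of z y]
  by (simp add: matrix_vector_right_distrib matrix_vector_mult_scaleR inner_add_left inner_add_right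
      algebra_simps power2_eq_square)

lemma qf_CS:
  fixes P :: "real^'d^'d"
  assumes "transpose P = P" and psd: "\<And>v. 0 \<le> v \<bullet> (P *v v)"
  shows "(y \<bullet> (P *v z))^2 \<le> (y \<bullet> (P *v y)) * (z \<bullet> (P *v z))"
proof -
  define a where "a = y \<bullet> (P *v y)"
  define bb where "bb = y \<bullet> (P *v z)"
  define c where "c = z \<bullet> (P *v z)"
  have E: "0 \<le> a + 2 * s * bb + s^2 * c" for s
    using psd[of "y + s *\<^sub>R z"] qf_expand[OF assms(1), of y s z] by (simp add: a_def bb_def c_def)
  have c0: "0 \<le> c" using psd c_def by simp
  show ?thesis
  proof (cases "c = 0")
    case True
    have "bb = 0"
    proof (rule ccontr)
      assume "bb \<noteq> 0"
      have "0 \<le> a + 2 * (-(a+1)/(2*bb)) * bb" using E[of "-(a+1)/(2*bb)"] True by simp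
      also have "\<dots> = -1" using \<open>bb \<noteq> 0\<close> by (simp add: field_simps)
      finally show False by simp
    qed
    then show ?thesis using True by (simp add: a_def bb_def c_def)
  next
    case False
    with c0 have cp: "c > 0" by simp
    have "0 \<le> a + 2 * (-bb/c) * bb + (-bb/c)^2 * c" using E by blast
    also have "\<dots> = a - bb^2 / c" using cp by (simp add: field_simps power2_eq_square)
    finally have "bb^2 / c \<le> a" by simp
    then have "bb^2 \<le> a * c" using cp by (simp add: divide_le_eq)
    then show ?thesis by (simp add: a_def bb_def c_def)
  qed
qed

lemma psd_zero_imp:
  fixes P :: "real^'d^'d"
  assumes "transpose P = P" and psd: "\<And>v. 0 \<le> v \<bullet> (P *v v)" and "v \<bullet> (P *v v) = 0"
  shows "P *v v = 0"
proof -
  have "((P *v v) \<bullet> (P *v v))^2 \<le> ((P *v v) \<bullet> (P *v (P *v v))) * (v \<bullet> (P *v v))"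
    by (rule qf_CS[OF assms(1) psd])
  then have "(P *v v) \<bullet> (P *v v) = 0" using assms(3) by simp
  then show ?thesis by simp
qed

lemma inj_imp_invertible:
  fixes P :: "real^'d^'d"
  assumes "\<And>v. P *v v = 0 \<Longrightarrow> v = 0"
  shows "invertible P"
  using assms matrix_left_invertible_ker invertible_left_inverse by blast

lemma invertible_ker:
  fixes P :: "real^'d^'d"
  assumes "invertible P" "P *v v = 0" shows "v = 0"
  using assms matrix_left_invertible_ker invertible_left_inverse by blast

lemma continuous_det: "continuous_on (UNIV::(real^'d^'d) set) det"
proof -
  have "continuous_on UNIV (\<lambda>A::real^'d^'d. \<Sum>p | p permutes (UNIV::'d set). of_int (sign p) * (\<Prod>i\<in>UNIV. A $ i $ p i))"
    by (intro continuous_intros continuous_on_component continuous_on_id)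
  then show ?thesis unfolding det_def[abs_def] .
qed


lemma pd_invertible:
  fixes P :: "real^'d^'d"
  assumes "\<And>v. v \<noteq> 0 \<Longrightarrow> 0 < v \<bullet> (P *v v)"
  shows "invertible P"
proof (rule inj_imp_invertible)
  fix v assume "P *v v = 0"
  then show "v = 0" using assms[of v] by (cases "v = 0") auto
qed

lemma spd_det_pos:
  fixes P :: "real^'d^'d"
  assumes "spd P" shows "det P > 0"
proof -
  define h where "h s = det (s *\<^sub>R P + (1 - s) *\<^sub>R mat 1)" for s :: real
  have pd: "transpose P = P" "\<And>v. v \<noteq> 0 \<Longrightarrow> 0 < v \<bullet> (P *v v)"
    using assms unfolding spd_def by auto
  have nz: "h s \<noteq> 0" if "0 \<le> s" "s \<le> 1" for s
  proof -
    have "invertible (s *\<^sub>R P + (1 - s) *\<^sub>R mat 1)"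
    proof (rule pd_invertible)
      fix v :: "real^'d" assume "v \<noteq> 0"
      have EQ: "v \<bullet> ((s *\<^sub>R P + (1 - s) *\<^sub>R mat 1) *v v) = s * (v \<bullet> (P *v v)) + (1 - s) * (v \<bullet> v)"
        by (simp add: matrix_vector_mult_add_rdistrib matrix_scaleR_vector_ac[symmetric] matrix_vector_mult_scaleR inner_add_right)
      have A: "0 < v \<bullet> (P *v v)" using pd(2) \<open>v \<noteq> 0\<close> by blast
      have A2: "0 < v \<bullet> v" using \<open>v \<noteq> 0\<close> by simp
      have "0 < s * (v \<bullet> (P *v v)) + (1 - s) * (v \<bullet> v)"
      proof (cases "s = 0")
        case True then show ?thesis using A2 by simp
      next
        case False then have "0 < s" using that by simp
        then show ?thesis using A A2 that
          by (intro add_pos_nonneg mult_pos_pos mult_nonneg_nonneg) auto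
      qed
      then show "0 < v \<bullet> ((s *\<^sub>R P + (1 - s) *\<^sub>R mat 1) *v v)" using EQ by simp
    qed
    then show ?thesis unfolding h_def by (simp add: invertible_det_nz)
  qed
  have cont: "continuous_on {0..1} h"
    unfolding h_def
    by (rule continuous_on_compose2[OF continuous_det]) (auto intro!: continuous_intros)
  have h0: "h 0 = 1" by (simp add: h_def)
  show ?thesis
  proof (rule ccontr)
    assume "\<not> det P > 0"
    then have "h 1 \<le> 0" by (simp add: h_def)
    from IVT2'[of h 1 0 0, OF this _ _ cont] h0 obtain s where "0 \<le> s" "s \<le> 1" "h s = 0" by auto
    with nz show False by blast
  qed
qed

lemma spd_inv:
  fixes S :: "real^'d^'d"
  assumes "spd S"
  shows "S ** matrix_inv S = mat 1" "matrix_inv S ** S = mat 1" "spd (matrix_inv S)"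
    "det (matrix_inv S) = 1 / det S" "matrix_inv (matrix_inv S) = S"
proof -
  have dp: "det S > 0" by (rule spd_det_pos[OF assms])
  then have "invertible S" by (simp add: invertible_det_nz)
  then have ex: "\<exists>A'. S ** A' = mat 1 \<and> A' ** S = mat 1" unfolding invertible_def .
  define Q where "Q = matrix_inv S"
  have Q: "S ** Q = mat 1 \<and> Q ** S = mat 1"
    unfolding Q_def matrix_inv_def by (rule someI_ex[OF ex])
  then show "S ** matrix_inv S = mat 1" "matrix_inv S ** S = mat 1" by (auto simp: Q_def)
  have ST: "transpose S = S" and Spd: "\<And>v. v \<noteq> 0 \<Longrightarrow> 0 < v \<bullet> (S *v v)"
    using assms unfolding spd_def by auto
  have "transpose Q ** S = mat 1"
    using arg_cong[OF conjunct1[OF Q], of transpose] by (simp add: matrix_transpose_mul ST)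
  then have "transpose Q = Q"
    by (metis Q matrix_mul_assoc matrix_mul_lid matrix_mul_rid)
  moreover have "0 < v \<bullet> (Q *v v)" if "v \<noteq> 0" for v
  proof -
    define w where "w = Q *v v"
    have vw: "v = S *v w" using Q by (simp add: w_def matrix_vector_mul_assoc)
    have "w \<noteq> 0" using that vw by auto
    then have "0 < w \<bullet> (S *v w)" using Spd by blast
    also have "w \<bullet> (S *v w) = v \<bullet> (Q *v v)"
      using vw qf_sym[OF ST, of w w] by (simp add: w_def inner_commute)
    finally show ?thesis .
  qed
  ultimately show "spd (matrix_inv S)" unfolding spd_def Q_def by auto
  have "det S * det Q = 1" using Q det_mul[of S Q] by simp
  then show "det (matrix_inv S) = 1 / det S" using dp by (simp add: Q_def field_simps)
  have "(SOME A'. Q ** A' = mat 1 \<and> A' ** Q = mat 1) = S"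
  proof (rule some_equality)
    show "Q ** S = mat 1 \<and> S ** Q = mat 1" using Q by simp
    fix A' assume "Q ** A' = mat 1 \<and> A' ** Q = mat 1"
    then show "A' = S" by (metis Q matrix_mul_assoc matrix_mul_lid matrix_mul_rid)
  qed
  then have "matrix_inv Q = S" by (simp only: matrix_inv_def)
  then show "matrix_inv (matrix_inv S) = S" by (simp add: Q_def)
qed


lemma hadamard_weak:
  fixes G :: "real^'d^'d"
  assumes nn: "\<And>i. 0 \<le> G$i$i" and cs: "\<And>i j. (G$i$j)^2 \<le> G$i$i * G$j$j"
  shows "det G \<le> fact CARD('d) * (\<Prod>i\<in>UNIV. G$i$i)"
proof -
  have trm: "of_int (sign p) * (\<Prod>i\<in>UNIV. G$i$p i) \<le> (\<Prod>i\<in>UNIV. G$i$i)"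
    if p: "p permutes (UNIV::'d set)" for p
  proof -
    have "of_int (sign p) * (\<Prod>i\<in>UNIV. G$i$p i) \<le> \<bar>\<Prod>i\<in>UNIV. G$i$p i\<bar>"
      by (simp add: sign_def abs_ge_self abs_ge_minus_self)
    also have "\<dots> = (\<Prod>i\<in>UNIV. \<bar>G$i$p i\<bar>)" by (simp add: abs_prod)
    also have "\<dots> \<le> (\<Prod>i\<in>UNIV. sqrt (G$i$i) * sqrt (G$p i$p i))"
    proof (rule prod_mono)
      fix i :: 'd
      have "\<bar>G$i$p i\<bar> \<le> sqrt (G$i$i * G$p i$p i)"
        using cs[of i "p i"] by (intro real_le_rsqrt) simp
      then show "0 \<le> \<bar>G$i$p i\<bar> \<and> \<bar>G$i$p i\<bar> \<le> sqrt (G$i$i) * sqrt (G$p i$p i)"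
        by (simp add: real_sqrt_mult)
    qed
    also have "\<dots> = (\<Prod>i\<in>UNIV. sqrt (G$i$i)) * (\<Prod>i\<in>UNIV. sqrt (G$p i$p i))"
      by (simp add: prod.distrib)
    also have "(\<Prod>i\<in>UNIV. sqrt (G$p i$p i)) = (\<Prod>i\<in>UNIV. sqrt (G$i$i))"
      using prod.permute[OF p, of "\<lambda>i. sqrt (G$i$i)"] by (simp add: o_def)
    also have "(\<Prod>i\<in>UNIV. sqrt (G$i$i)) * (\<Prod>i\<in>UNIV. sqrt (G$i$i)) = (\<Prod>i\<in>UNIV. G$i$i)"
      by (simp add: prod.distrib[symmetric] nn)
    finally show ?thesis .
  qed
  have "det G = (\<Sum>p | p permutes (UNIV::'d set). of_int (sign p) * (\<Prod>i\<in>UNIV. G$i$p i))"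
    by (simp add: det_def)
  also have "\<dots> \<le> (\<Sum>p | p permutes (UNIV::'d set). (\<Prod>i\<in>UNIV. G$i$i))"
    by (rule sum_mono) (use trm in auto)
  also have "\<dots> = fact CARD('d) * (\<Prod>i\<in>UNIV. G$i$i)"
    by (simp add: card_permutations)
  finally show ?thesis .
qed


lemma gram_entry:
  fixes P :: "real^'d^'d" and w :: "'d \<Rightarrow> real^'d"
  shows "(transpose (\<chi> i j. w j $ i) ** P ** (\<chi> i j. w j $ i)) $ j $ l = w j \<bullet> (P *v w l)"
  by (simp add: matrix_matrix_mult_def matrix_vector_mult_def inner_vec_def transpose_def
      sum_distrib_left sum_distrib_right mult.assoc mult.left_commute)
     (rule sum.swap)

lemma gram_det_bound:
  fixes P :: "real^'d^'d" and w :: "'d \<Rightarrow> real^'d"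
  assumes sym: "transpose P = P" and psd: "\<And>v. 0 \<le> v \<bullet> (P *v v)"
  shows "det P * (det (\<chi> i j. w j $ i))^2 \<le> fact CARD('d) * (\<Prod>j\<in>UNIV. w j \<bullet> (P *v w j))"
proof -
  define Y where "Y = ((\<chi> i j. w j $ i) :: real^'d^'d)"
  define G where "G = transpose Y ** P ** Y"
  have Ge: "G $ j $ l = w j \<bullet> (P *v w l)" for j l unfolding G_def Y_def by (rule gram_entry)
  have "det G = det Y * det P * det Y"
    unfolding G_def by (simp add: det_mul det_transpose)
  then have "det P * (det Y)^2 = det G" by (simp add: power2_eq_square algebra_simps)
  also have "\<dots> \<le> fact CARD('d) * (\<Prod>i\<in>UNIV. G$i$i)"
    by (rule hadamard_weak) (auto simp: Ge psd qf_CS[OF sym psd])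
  finally show ?thesis by (simp add: Ge Y_def)
qed

lemma indep_det_nz:
  fixes w :: "'d \<Rightarrow> real^'d"
  assumes "inj w" "independent (range w)"
  shows "det (\<chi> i j. w j $ i) \<noteq> 0"
proof -
  define Y where "Y = ((\<chi> i j. w j $ i) :: real^'d^'d)"
  have "invertible Y"
  proof (rule inj_imp_invertible)
    fix c assume c: "Y *v c = 0"
    have "Y *v c = (\<Sum>j\<in>UNIV. c $ j *\<^sub>R w j)"
      by (simp add: Y_def matrix_vector_mult_def vec_eq_iff sum_component mult.commute)
    then have s0: "(\<Sum>j\<in>UNIV. c $ j *\<^sub>R w j) = 0" using c by simp
    define u where "u v = c $ (inv w v)" for v
    have "(\<Sum>v\<in>range w. u v *\<^sub>R v) = (\<Sum>j\<in>UNIV. u (w j) *\<^sub>R w j)"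
      using sum.reindex[of w UNIV "\<lambda>v. u v *\<^sub>R v"] assms(1) by (simp add: o_def)
    also have "\<dots> = 0" using s0 by (simp add: u_def inv_f_f[OF assms(1)])
    finally have "(\<Sum>v\<in>range w. u v *\<^sub>R v) = 0" .
    then have "\<forall>v\<in>range w. u v = 0"
      using assms(2) dependent_finite[of "range w"] by auto
    then show "c = 0" by (simp add: u_def vec_eq_iff inv_f_f[OF assms(1)])
  qed
  then show ?thesis by (simp add: Y_def invertible_det_nz)
qed


lemma sum_step:
  fixes u :: "nat \<Rightarrow> real"
  assumes "finite A"
  shows "(\<Sum>i\<in>A. (if u i \<le> t then 0 else c)) = c * (real (card A) - real (card {i\<in>A. u i \<le> t}))"
proof -
  have "(\<Sum>i\<in>A. (if u i \<le> t then 0 else c)) = (\<Sum>i\<in>A - {i\<in>A. u i \<le> t}. c)"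
    using assms by (intro sum.mono_neutral_cong_right) auto
  also have "\<dots> = c * real (card (A - {i\<in>A. u i \<le> t}))" by simp
  also have "card (A - {i\<in>A. u i \<le> t}) = card A - card {i\<in>A. u i \<le> t}"
    using assms by (intro card_Diff_subset) auto
  also have "real (card A - card {i\<in>A. u i \<le> t}) = real (card A) - real (card {i\<in>A. u i \<le> t})"
    using assms by (intro of_nat_diff card_mono) auto
  finally show ?thesis .
qed

lemma min_step:
  fixes a t t' :: real
  assumes "t' < t" "a \<le> t' \<or> t \<le> a"
  shows "min a t - min a t' = (if a \<le> t' then 0 else t - t')"
  using assms by auto

lemma layer_cake:
  fixes u :: "nat \<Rightarrow> real" and N B :: "nat set" and kk nn \<gamma> m M :: real
  assumes fin: "finite N" "finite B" and mM: "m \<le> M"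
    and lowN: "\<forall>i\<in>N. m \<le> u i" and rB: "\<forall>b\<in>B. m \<le> u b \<and> u b \<le> M"
    and slope: "\<And>\<tau>. m \<le> \<tau> \<Longrightarrow> \<tau> < M \<Longrightarrow>
        \<gamma> \<le> nn * real (card {b\<in>B. u b \<le> \<tau>}) - kk * real (card {i\<in>N. u i \<le> \<tau>})"
  shows "(kk * real (card N) - nn * real (card B)) * M + \<gamma> * (M - m)
         \<le> kk * (\<Sum>i\<in>N. min (u i) M) - nn * (\<Sum>b\<in>B. u b)"
proof -
  define G where "G \<tau> = kk * (\<Sum>i\<in>N. min (u i) \<tau>) - nn * (\<Sum>b\<in>B. min (u b) \<tau>)
      - (kk * real (card N) - nn * real (card B)) * \<tau> - \<gamma> * (\<tau> - m)" for \<tau>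
  define V where "V = insert m (u ` (N \<union> B))"
  have finV: "finite V" using fin by (simp add: V_def)
  have main: "\<forall>\<tau>. card {v\<in>V. v < \<tau>} = c \<longrightarrow> m \<le> \<tau> \<longrightarrow> \<tau> \<le> M \<longrightarrow> 0 \<le> G \<tau>" for c
  proof (induction c rule: less_induct)
    case (less c)
    show ?case
    proof (intro allI impI)
      fix \<tau> assume c: "card {v\<in>V. v < \<tau>} = c" and t1: "m \<le> \<tau>" and t2: "\<tau> \<le> M"
      show "0 \<le> G \<tau>"
      proof (cases "\<tau> = m")
        case True
        have "(\<Sum>i\<in>N. min (u i) m) = (\<Sum>i\<in>N. m)" using lowN by (intro sum.cong) auto
        moreover have "(\<Sum>b\<in>B. min (u b) m) = (\<Sum>b\<in>B. m)" using rB by (intro sum.cong) auto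
        ultimately show ?thesis using True by (simp add: G_def algebra_simps)
      next
        case False
        with t1 have mt: "m < \<tau>" by simp
        define W where "W = {v\<in>V. v < \<tau>}"
        have finW: "finite W" using finV by (simp add: W_def)
        have mW: "m \<in> W" using mt by (simp add: W_def V_def)
        define t' where "t' = Max W"
        have t'W: "t' \<in> W" using finW mW unfolding t'_def by (intro Max_in) auto
        have t't: "t' < \<tau>" using t'W by (simp add: W_def)
        have mt': "m \<le> t'" using finW mW by (simp add: t'_def)
        have gap: "v \<le> t' \<or> \<tau> \<le> v" if "v \<in> V" for v
          using that finW by (auto simp: t'_def W_def not_less)
        have cless: "card {v\<in>V. v < t'} < c"
        proof -
          have "{v\<in>V. v < t'} \<subset> W" using t'W t't by (auto simp: W_def)
          then show ?thesis using finW c psubset_card_mono unfolding W_def by metis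
        qed
        have IH: "0 \<le> G t'" using less.IH[OF cless] mt' t't t2 by auto
        have sN: "(\<Sum>i\<in>N. min (u i) \<tau>) - (\<Sum>i\<in>N. min (u i) t')
            = (\<tau> - t') * (real (card N) - real (card {i\<in>N. u i \<le> t'}))"
        proof -
          have "(\<Sum>i\<in>N. min (u i) \<tau>) - (\<Sum>i\<in>N. min (u i) t') = (\<Sum>i\<in>N. min (u i) \<tau> - min (u i) t')"
            by (simp add: sum_subtractf)
          also have "\<dots> = (\<Sum>i\<in>N. (if u i \<le> t' then 0 else \<tau> - t'))"
            by (intro sum.cong refl min_step t't gap) (auto simp: V_def)
          finally show ?thesis using sum_step[OF fin(1)] by simp
        qed
        have sB: "(\<Sum>i\<in>B. min (u i) \<tau>) - (\<Sum>i\<in>B. min (u i) t')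
            = (\<tau> - t') * (real (card B) - real (card {i\<in>B. u i \<le> t'}))"
        proof -
          have "(\<Sum>i\<in>B. min (u i) \<tau>) - (\<Sum>i\<in>B. min (u i) t') = (\<Sum>i\<in>B. min (u i) \<tau> - min (u i) t')"
            by (simp add: sum_subtractf)
          also have "\<dots> = (\<Sum>i\<in>B. (if u i \<le> t' then 0 else \<tau> - t'))"
            by (intro sum.cong refl min_step t't gap) (auto simp: V_def)
          finally show ?thesis using sum_step[OF fin(2)] by simp
        qed
        have "G \<tau> - G t' = (\<tau> - t') * (nn * real (card {b\<in>B. u b \<le> t'}) - kk * real (card {i\<in>N. u i \<le> t'}) - \<gamma>)"
        proof -
          have "G \<tau> - G t' = kk * ((\<Sum>i\<in>N. min (u i) \<tau>) - (\<Sum>i\<in>N. min (u i) t'))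
             - nn * ((\<Sum>i\<in>B. min (u i) \<tau>) - (\<Sum>i\<in>B. min (u i) t'))
             - (kk * real (card N) - nn * real (card B)) * (\<tau> - t') - \<gamma> * (\<tau> - t')"
            unfolding G_def by (simp add: algebra_simps)
          also have "\<dots> = (\<tau> - t') * (nn * real (card {b\<in>B. u b \<le> t'}) - kk * real (card {i\<in>N. u i \<le> t'}) - \<gamma>)"
            unfolding sN sB by (simp add: algebra_simps)
          finally show ?thesis .
        qed
        moreover have "0 \<le> (\<tau> - t') * (nn * real (card {b\<in>B. u b \<le> t'}) - kk * real (card {i\<in>N. u i \<le> t'}) - \<gamma>)"
          using slope[OF mt'] t't t2 by (intro mult_nonneg_nonneg) auto
        ultimately show ?thesis using IH by simp
      qed
    qed
  qed
  have "0 \<le> G M" using main mM by blast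
  moreover have "(\<Sum>b\<in>B. min (u b) M) = (\<Sum>b\<in>B. u b)" using rB by (intro sum.cong) auto
  ultimately show ?thesis by (simp add: G_def)
qed


definition bases :: "(nat \<Rightarrow> real^'d) \<Rightarrow> nat set \<Rightarrow> nat set set" where
  "bases x N = {B. B \<subseteq> N \<and> card B = CARD('d) \<and> inj_on x B \<and> independent (x ` B)}"

lemma bases_finite: "finite N \<Longrightarrow> finite (bases x N)"
  unfolding bases_def by (rule finite_subset[of _ "Pow N"]) auto

lemma bases_fin: "B \<in> bases x N \<Longrightarrow> finite B"
  unfolding bases_def by (auto intro: card_ge_0_finite)

lemma bases_span:
  fixes x :: "nat \<Rightarrow> real^'d"
  assumes "B \<in> bases x N" shows "span (x ` B) = UNIV"
proof -
  have "card (x ` B) = CARD('d)" using assms unfolding bases_def by (auto simp: card_image)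
  then have "UNIV \<subseteq> span (x ` B)" using assms unfolding bases_def
    by (intro card_ge_dim_independent) auto
  then show ?thesis by auto
qed

lemma bases_nonempty:
  fixes x :: "nat \<Rightarrow> real^'d"
  assumes "span (x ` N) = UNIV"
  shows "bases x N \<noteq> {}"
proof -
  obtain T where T: "T \<subseteq> x ` N" "independent T" "x ` N \<subseteq> span T"
    by (rule maximal_independent_subset)
  have "span T = UNIV" using T assms by (metis span_eq span_span top.extremum_unique span_mono)
  then have cT: "card T = CARD('d)"
    using dim_span_eq_card_independent[OF T(2)] by simp
  obtain B where B: "B \<subseteq> N" "inj_on x B" "T = x ` B" using T(1) subset_image_inj by metis
  have "card B = CARD('d)" using cT B by (simp add: card_image)
  then have "B \<in> bases x N" using B T unfolding bases_def by auto
  then show ?thesis by auto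
qed

lemma exchange:
  fixes x :: "nat \<Rightarrow> real^'d" and u :: "nat \<Rightarrow> real"
  assumes B: "B \<in> bases x N" and minB: "\<And>B'. B' \<in> bases x N \<Longrightarrow> sum u B \<le> sum u B'"
    and i: "i \<in> N" "u i \<le> \<tau>"
  shows "x i \<in> span (x ` {b\<in>B. u b \<le> \<tau>})"
proof (rule ccontr)
  define Bt where "Bt = {b\<in>B. u b \<le> \<tau>}"
  assume nsp: "x i \<notin> span (x ` {b\<in>B. u b \<le> \<tau>})"
  then have nsp': "x i \<notin> span (x ` Bt)" by (simp add: Bt_def)
  have finB: "finite B" using bases_fin[OF B] .
  have Bd: "B \<subseteq> N" "card B = CARD('d)" "inj_on x B" "independent (x ` B)"
    using B unfolding bases_def by auto
  have spB: "span (x ` B) = UNIV" by (rule bases_span[OF B])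
  define F where "F = {T. Bt \<subseteq> T \<and> T \<subseteq> B \<and> x i \<in> span (x ` T)}"
  have "B \<in> F" using spB by (auto simp: F_def Bt_def)
  then obtain T where T: "T \<in> F" and Tmin: "\<And>T'. T' \<in> F \<Longrightarrow> card T \<le> card T'"
    using ex_has_least_nat[of "\<lambda>T. T \<in> F" B card] by blast
  have TF: "Bt \<subseteq> T" "T \<subseteq> B" "x i \<in> span (x ` T)" using T by (auto simp: F_def)
  have "T \<noteq> Bt" using TF(3) nsp' by auto
  then obtain b where b: "b \<in> T" "b \<notin> Bt" using TF(1) by blast
  have bB: "b \<in> B" using b TF(2) by auto
  have ub: "\<tau> < u b" using b bB by (auto simp: Bt_def)
  have finT: "finite T" using TF(2) finB finite_subset by blast
  have "T - {b} \<notin> F"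
  proof
    assume "T - {b} \<in> F"
    then have "card T \<le> card (T - {b})" by (rule Tmin)
    moreover have "card (T - {b}) < card T" using finT b(1) by (meson card_Diff1_less)
    ultimately show False by simp
  qed
  then have nsp2: "x i \<notin> span (x ` (T - {b}))" using TF b by (auto simp: F_def)
  have "x ` T = insert (x b) (x ` (T - {b}))" using b(1) by auto
  then have "x i \<in> span (insert (x b) (x ` (T - {b})))" using TF(3) by simp
  then have xb: "x b \<in> span (insert (x i) (x ` (T - {b})))"
    using in_span_insert[OF _ nsp2] by blast
  define B' where "B' = insert i (B - {b})"
  have iB: "i \<notin> B"
  proof
    assume "i \<in> B" then have "i \<in> Bt" using i by (simp add: Bt_def)
    then have "x i \<in> span (x ` Bt)" by (intro span_base) auto
    with nsp' show False by simp
  qed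
  have "x ` B \<subseteq> span (x ` B')"
  proof
    fix z assume "z \<in> x ` B"
    then obtain c where c: "c \<in> B" "z = x c" by auto
    show "z \<in> span (x ` B')"
    proof (cases "c = b")
      case True
      have "span (insert (x i) (x ` (T - {b}))) \<subseteq> span (x ` B')"
        using TF(2) by (intro span_mono) (auto simp: B'_def)
      then show ?thesis using xb True c by auto
    next
      case False then show ?thesis using c by (intro span_base) (auto simp: B'_def)
    qed
  qed
  then have "span (x ` B) \<subseteq> span (x ` B')" by (intro span_minimal) (auto simp: subspace_span)
  then have spB': "span (x ` B') = UNIV" using spB by auto
  have finB': "finite B'" using finB by (simp add: B'_def)
  have cB': "card B' = CARD('d)" using iB bB finB Bd(2) by (simp add: B'_def card_Diff1_less)
  have cxB': "card (x ` B') \<le> CARD('d)" using card_image_le[OF finB', of x] cB' by simp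
  have ind': "independent (x ` B')"
    using cxB' spB' finB' by (intro card_le_dim_spanning[of _ UNIV]) auto
  have "CARD('d) \<le> card (x ` B')"
    using span_card_ge_dim[of "x ` B'" UNIV] spB' finB' by simp
  then have "card (x ` B') = card B'" using cxB' cB' by simp
  then have inj': "inj_on x B'" using finB' by (metis eq_card_imp_inj_on)
  have "B' \<subseteq> N" using Bd(1) i(1) by (auto simp: B'_def)
  then have "B' \<in> bases x N" using cB' inj' ind' by (simp add: bases_def)
  then have "sum u B \<le> sum u B'" by (rule minB)
  moreover have "sum u B' = u i + (sum u B - u b)"
  proof -
    have "sum u B' = u i + sum u (B - {b})" using finB iB by (simp add: B'_def)
    also have "sum u (B - {b}) = sum u B - u b" using sum.remove[OF finB bB, of u] by simp
    finally show ?thesis .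
  qed
  ultimately show False using ub i(2) by simp
qed


definition gfun :: "real \<Rightarrow> real \<Rightarrow> real \<Rightarrow> nat \<Rightarrow> (nat \<Rightarrow> real^'d) \<Rightarrow> real^'d^'d \<Rightarrow> real" where
  "gfun \<alpha> b \<beta> n x P = real n / 2 * ln (det P)
     + (\<Sum>i<n. ln (kotz_phi (real CARD('d)) \<alpha> b \<beta> (x i \<bullet> (P *v x i))))"

lemma loglik_eq:
  fixes S :: "real^'d^'d"
  assumes "spd S"
  shows "kotz_loglik \<alpha> b \<beta> n x S = gfun \<alpha> b \<beta> n x (matrix_inv S)"
  using spd_inv(4)[OF assms] spd_det_pos[OF assms]
  by (simp add: kotz_loglik_def gfun_def ln_div)

lemma phi_ln:
  assumes "t > 0" "b > 0"
  shows "ln (kotz_phi d \<alpha> b \<beta> t) = (\<alpha> - d / 2) * ln t - exp (\<beta> * (ln t - ln b))"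
  using assms by (simp add: kotz_phi_def ln_mult ln_powr powr_def ln_div)

lemma phi_zero: "ln (kotz_phi d \<alpha> b \<beta> 0) = 0"
  by (simp add: kotz_phi_def)

lemma gfun_eq:
  fixes P :: "real^'d^'d" and x :: "nat \<Rightarrow> real^'d"
  assumes pd: "\<And>v. v \<noteq> 0 \<Longrightarrow> 0 < v \<bullet> (P *v v)" and "b > 0"
  shows "gfun \<alpha> b \<beta> n x P = real n / 2 * ln (det P)
     + (\<Sum>i\<in>{i. i < n \<and> x i \<noteq> 0}. (\<alpha> - real CARD('d) / 2) * ln (x i \<bullet> (P *v x i))
          - exp (\<beta> * (ln (x i \<bullet> (P *v x i)) - ln b)))"
proof -
  have "(\<Sum>i<n. ln (kotz_phi (real CARD('d)) \<alpha> b \<beta> (x i \<bullet> (P *v x i))))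
      = (\<Sum>i\<in>{i. i < n \<and> x i \<noteq> 0}. ln (kotz_phi (real CARD('d)) \<alpha> b \<beta> (x i \<bullet> (P *v x i))))"
    by (rule sum.mono_neutral_cong_right) (auto simp: phi_zero)
  also have "\<dots> = (\<Sum>i\<in>{i. i < n \<and> x i \<noteq> 0}. (\<alpha> - real CARD('d) / 2) * ln (x i \<bullet> (P *v x i))
          - exp (\<beta> * (ln (x i \<bullet> (P *v x i)) - ln b)))"
    using pd assms(2) by (intro sum.cong refl phi_ln) auto
  finally show ?thesis by (simp add: gfun_def)
qed

lemma numeric:
  fixes c A0 c1 G \<beta> b :: real
  assumes c1: "c1 > 0" and G: "G > 0" and \<beta>: "\<beta> > 0" and b: "b > 0"
  shows "\<exists>L U. \<forall>(u::nat\<Rightarrow>real) N M m j. (m \<le> M \<and> (\<forall>i\<in>N. m \<le> u i) \<and> j \<in> N \<and> u j = M \<and>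
      (\<forall>i\<in>N. c \<le> A0 + c1 * M - G * (M - m) - exp (\<beta> * (u i - ln b))))
      \<longrightarrow> (\<forall>i\<in>N. L \<le> u i \<and> u i \<le> U)"
proof -
  define p where "p = A0 - c + c1 * ln b"
  define q where "q = c1 / \<beta>"
  define Y0 where "Y0 = max 1 (2 * (\<bar>p\<bar> + \<bar>q\<bar>))"
  define Mhi where "Mhi = ln b + Y0 / \<beta>"
  define Q where "Q = A0 - c + c1 * Mhi"
  define L where "L = (c - A0) / c1 - Q / G"
  define U where "U = ln b + ln (max 1 Q) / \<beta>"
  show ?thesis
  proof (intro exI allI impI)
    fix u :: "nat \<Rightarrow> real" and N M m j
    assume H: "m \<le> M \<and> (\<forall>i\<in>N. m \<le> u i) \<and> j \<in> N \<and> u j = M \<and>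
      (\<forall>i\<in>N. c \<le> A0 + c1 * M - G * (M - m) - exp (\<beta> * (u i - ln b)))"
    then have mM: "m \<le> M" and low: "\<forall>i\<in>N. m \<le> u i" and jN: "j \<in> N" and uj: "u j = M"
      and ineq: "\<And>i. i \<in> N \<Longrightarrow> c \<le> A0 + c1 * M - G * (M - m) - exp (\<beta> * (u i - ln b))"
      by auto
    have e0: "0 < exp z" for z :: real by simp
    have GM: "0 \<le> G * (M - m)" using G mM by simp
    have ij: "c \<le> A0 + c1 * M - G * (M - m) - exp (\<beta> * (M - ln b))" using ineq[OF jN] uj by simp
    have Mlo: "(c - A0) / c1 \<le> M"
    proof -
      have "c - A0 \<le> c1 * M" using ij GM e0[of "\<beta> * (M - ln b)"] by linarith
      then show ?thesis using c1 by (simp add: divide_le_eq mult.commute)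
    qed
    define y where "y = \<beta> * (M - ln b)"
    have Mdef: "M = ln b + y / \<beta>" using \<beta> by (simp add: y_def)
    have ey: "exp y \<le> p + q * y"
    proof -
      have "exp y \<le> A0 - c + c1 * M" using ij GM by (simp add: y_def)
      also have "c1 * M = c1 * ln b + q * y" using \<beta> by (simp add: Mdef q_def field_simps)
      finally show ?thesis by (simp add: p_def)
    qed
    have yY: "y \<le> Y0"
    proof (rule ccontr)
      assume "\<not> y \<le> Y0"
      then have y1: "y > 1" and y2: "y > 2 * (\<bar>p\<bar> + \<bar>q\<bar>)" by (auto simp: Y0_def)
      have "1 + y + y^2 / 2 \<le> exp y" using y1 by (intro exp_lower_Taylor_quadratic) simp
      then have "y^2 / 2 \<le> p + q * y" using ey y1 by simp
      also have "\<dots> \<le> (\<bar>p\<bar> + \<bar>q\<bar>) * y"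
      proof -
        have "\<bar>p\<bar> * 1 \<le> \<bar>p\<bar> * y" using y1 by (intro mult_left_mono) auto
        moreover have "q * y \<le> \<bar>q\<bar> * y" using y1 by (intro mult_right_mono) auto
        moreover have "p \<le> \<bar>p\<bar>" by simp
        ultimately show ?thesis by (simp add: distrib_right)
      qed
      finally have "y * y \<le> 2 * (\<bar>p\<bar> + \<bar>q\<bar>) * y" by (simp add: power2_eq_square algebra_simps)
      then have "y \<le> 2 * (\<bar>p\<bar> + \<bar>q\<bar>)" using y1 by simp
      with y2 show False by simp
    qed
    have MMhi: "M \<le> Mhi" using yY \<beta> by (simp add: Mdef Mhi_def divide_right_mono)
    have GQ: "G * (M - m) \<le> Q"
    proof -
      have "G * (M - m) \<le> A0 - c + c1 * M" using ij e0[of "\<beta> * (M - ln b)"] by linarith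
      also have "\<dots> \<le> A0 - c + c1 * Mhi" using MMhi c1 by simp
      finally show ?thesis by (simp add: Q_def)
    qed
    have mlow: "(c - A0) / c1 - Q / G \<le> m"
    proof -
      have "M - m \<le> Q / G" using GQ G by (simp add: le_divide_eq mult.commute)
      then show ?thesis using Mlo by simp
    qed
    show "\<forall>i\<in>N. L \<le> u i \<and> u i \<le> U"
    proof
      fix i assume iN: "i \<in> N"
      have "L \<le> u i" using mlow low iN unfolding L_def by force
      moreover have "u i \<le> U"
      proof -
        have "exp (\<beta> * (u i - ln b)) \<le> A0 - c + c1 * M" using ineq[OF iN] GM by linarith
        also have "\<dots> \<le> Q" using MMhi c1 by (simp add: Q_def)
        also have "\<dots> \<le> max 1 Q" by simp
        finally have "\<beta> * (u i - ln b) \<le> ln (max 1 Q)"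
          by (metis exp_le_cancel_iff exp_ln max.strict_coboundedI1 zero_less_one)
        then have "u i - ln b \<le> ln (max 1 Q) / \<beta>" using \<beta> by (simp add: le_divide_eq mult.commute)
        then show ?thesis by (simp add: U_def)
      qed
      ultimately show "L \<le> u i \<and> u i \<le> U" by simp
    qed
  qed
qed


lemma bilin:
  fixes P :: "real^'d^'d" and a :: "real^'d \<Rightarrow> real"
  shows "(\<Sum>v\<in>X. a v *\<^sub>R v) \<bullet> (P *v (\<Sum>w\<in>X. a w *\<^sub>R w))
       = (\<Sum>v\<in>X. \<Sum>w\<in>X. a v * a w * (v \<bullet> (P *v w)))"
proof -
  have "(\<Sum>v\<in>X. a v *\<^sub>R v) \<bullet> (P *v (\<Sum>w\<in>X. a w *\<^sub>R w))
      = (\<Sum>w\<in>X. \<Sum>v\<in>X. a w * (a v * (v \<bullet> (P *v w))))"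
    by (simp add: vec.sum matrix_vector_mult_scaleR inner_sum_left inner_sum_right sum_distrib_left)
  also have "\<dots> = (\<Sum>v\<in>X. \<Sum>w\<in>X. a w * (a v * (v \<bullet> (P *v w))))"
    by (rule sum.swap)
  also have "\<dots> = (\<Sum>v\<in>X. \<Sum>w\<in>X. a v * a w * (v \<bullet> (P *v w)))"
    by (simp only: mult_ac)
  finally show ?thesis .
qed

lemma qf_abs_le:
  fixes P :: "real^'d^'d"
  assumes sym: "transpose P = P" and psd: "\<And>v. 0 \<le> v \<bullet> (P *v v)"
    and "v \<bullet> (P *v v) \<le> T" "w \<bullet> (P *v w) \<le> T"
  shows "\<bar>v \<bullet> (P *v w)\<bar> \<le> T"
proof -
  have T0: "0 \<le> T" using psd[of v] assms(3) by linarith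
  have "(v \<bullet> (P *v w))^2 \<le> (v \<bullet> (P *v v)) * (w \<bullet> (P *v w))" by (rule qf_CS[OF sym psd])
  also have "\<dots> \<le> T * T" using assms psd T0 by (intro mult_mono) auto
  finally have "(v \<bullet> (P *v w))^2 \<le> T^2" by (simp add: power2_eq_square)
  then show ?thesis using power2_le_iff_abs_le[OF T0] by simp
qed

lemma entries_bound:
  fixes X :: "(real^'d) set"
  assumes finX: "finite X" and spX: "span X = UNIV"
  shows "\<exists>K\<ge>0. \<forall>(P::real^'d^'d) T. transpose P = P \<longrightarrow> (\<forall>v. 0 \<le> v \<bullet> (P *v v)) \<longrightarrow>
            (\<forall>v\<in>X. v \<bullet> (P *v v) \<le> T) \<longrightarrow> (\<forall>j l. \<bar>P$j$l\<bar> \<le> K * T)"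
proof -
  have "\<exists>c. axis j 1 = (\<Sum>v\<in>X. c v *\<^sub>R v)" for j :: 'd
  proof -
    have "axis j (1::real) \<in> span X" using spX by simp
    then show ?thesis using span_finite[OF finX] by auto
  qed
  then obtain cf where cf: "\<And>j. axis j 1 = (\<Sum>v\<in>X. cf j v *\<^sub>R v)" by metis
  define S where "S = (\<Sum>j\<in>UNIV. \<Sum>v\<in>X. \<bar>cf j v\<bar>)"
  define K where "K = S^2"
  have S0: "0 \<le> S" by (simp add: S_def sum_nonneg)
  show ?thesis
  proof (intro exI[of _ K] conjI allI impI)
    show "0 \<le> K" by (simp add: K_def)
    fix P :: "real^'d^'d" and T :: real
    assume sym: "transpose P = P" and psd: "\<forall>v. 0 \<le> v \<bullet> (P *v v)" and XT: "\<forall>v\<in>X. v \<bullet> (P *v v) \<le> T"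
    have psd': "\<And>v. 0 \<le> v \<bullet> (P *v v)" using psd by blast
    have diag: "P$j$j \<le> K * T" and dnn: "0 \<le> P$j$j" for j
    proof -
      have eq: "P$j$j = (\<Sum>v\<in>X. \<Sum>w\<in>X. cf j v * cf j w * (v \<bullet> (P *v w)))"
      proof -
        have "P$j$j = axis j 1 \<bullet> (P *v axis j 1)"
          by (simp add: inner_axis' matrix_vector_mult_basis column_def)
        also have "\<dots> = (\<Sum>v\<in>X. \<Sum>w\<in>X. cf j v * cf j w * (v \<bullet> (P *v w)))"
          unfolding cf[of j] by (rule bilin)
        finally show ?thesis .
      qed
      show "0 \<le> P$j$j"
        using psd'[of "axis j 1"] by (simp add: inner_axis' matrix_vector_mult_basis column_def)
      have "P$j$j \<le> (\<Sum>v\<in>X. \<Sum>w\<in>X. \<bar>cf j v\<bar> * \<bar>cf j w\<bar> * T)"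
        unfolding eq
      proof (intro sum_mono)
        fix v w assume "v \<in> X" "w \<in> X"
        then have "\<bar>v \<bullet> (P *v w)\<bar> \<le> T" using XT by (intro qf_abs_le[OF sym psd']) auto
        then have "cf j v * cf j w * (v \<bullet> (P *v w)) \<le> \<bar>cf j v * cf j w\<bar> * T"
        proof -
          assume A: "\<bar>v \<bullet> (P *v w)\<bar> \<le> T"
          have "cf j v * cf j w * (v \<bullet> (P *v w)) \<le> \<bar>cf j v * cf j w * (v \<bullet> (P *v w))\<bar>" by simp
          also have "\<dots> = \<bar>cf j v * cf j w\<bar> * \<bar>v \<bullet> (P *v w)\<bar>" by (simp add: abs_mult)
          also have "\<dots> \<le> \<bar>cf j v * cf j w\<bar> * T" using A by (intro mult_left_mono) auto
          finally show ?thesis .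
        qed
        then show "cf j v * cf j w * (v \<bullet> (P *v w)) \<le> \<bar>cf j v\<bar> * \<bar>cf j w\<bar> * T"
          by (simp add: abs_mult)
      qed
      also have "\<dots> = (\<Sum>v\<in>X. \<bar>cf j v\<bar>)^2 * T"
      proof -
        have "(\<Sum>v\<in>X. \<bar>cf j v\<bar>)^2 * T = (\<Sum>v\<in>X. \<Sum>w\<in>X. \<bar>cf j v\<bar> * \<bar>cf j w\<bar>) * T"
          by (simp only: power2_eq_square sum_product)
        also have "\<dots> = (\<Sum>v\<in>X. \<Sum>w\<in>X. \<bar>cf j v\<bar> * \<bar>cf j w\<bar> * T)"
          by (simp only: sum_distrib_right)
        finally show ?thesis by simp
      qed
      also have "\<dots> \<le> K * T"
      proof -
        have T0: "0 \<le> T"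
        proof (cases "X = {}")
          case True
          then have "span X = {0}" by simp
          then have "axis j (1::real) = 0" using spX by auto
          then have "(axis j (1::real)) $ j = (0::real^'d) $ j" by simp
          then show ?thesis by (simp add: axis_def)
        next
          case False
          then obtain v where "v \<in> X" by blast
          then show ?thesis using XT psd' order_trans by blast
        qed
        have "(\<Sum>v\<in>X. \<bar>cf j v\<bar>) \<le> S"
          unfolding S_def using member_le_sum[of j UNIV "\<lambda>j. \<Sum>v\<in>X. \<bar>cf j v\<bar>"]
          by (simp add: sum_nonneg)
        then have "(\<Sum>v\<in>X. \<bar>cf j v\<bar>)^2 \<le> K" unfolding K_def
          by (intro power_mono) (auto simp: sum_nonneg)
        then show ?thesis using T0 by (intro mult_right_mono) auto
      qed
      finally show "P$j$j \<le> K * T" .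
    qed
    fix j l
    have "(P$j$l)^2 \<le> P$j$j * P$l$l"
      using qf_CS[OF sym psd', of "axis j 1" "axis l 1"]
      by (simp add: inner_axis' matrix_vector_mult_basis column_def)
    also have "\<dots> \<le> (K * T) * (K * T)"
    proof -
      have "0 \<le> K * T" using diag[of j] dnn[of j] by linarith
      then show ?thesis using diag dnn by (intro mult_mono) auto
    qed
    finally have "(P$j$l)^2 \<le> (K * T)^2" by (simp add: power2_eq_square)
    moreover have "0 \<le> K * T" using diag[of j] dnn[of j] by linarith
    ultimately show "\<bar>P$j$l\<bar> \<le> K * T" using power2_le_iff_abs_le by blast
  qed
qed


lemma span_empty_not_univ:
  assumes "span (X :: (real^'d) set) = UNIV" shows "X \<noteq> {}"
proof
  assume "X = {}"
  then have "axis undefined (1::real) = (0::real^'d)" using assms by auto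
  then have "(axis undefined (1::real)) $ undefined = (0::real^'d) $ undefined" by simp
  then show False by (simp add: axis_def)
qed

lemma key:
  fixes \<alpha> b \<beta> :: real and n :: nat and x :: "nat \<Rightarrow> real^'d"
  assumes a0: "\<alpha> > 0" and b0: "b > 0" and \<beta>0: "\<beta> > 0"
    and ad: "\<alpha> < real CARD('d) / 2"
    and sp: "span (x ` {..<n}) = UNIV"
    and cond: "\<And>L :: (real^'d) set. subspace L \<Longrightarrow> 1 \<le> dim L \<Longrightarrow> dim L < CARD('d) \<Longrightarrow>
           real (card {i. i < n \<and> x i \<in> L}) / real n < real (dim L) / (real CARD('d) - 2 * \<alpha>)"
  shows "\<exists>A0 c1 G. c1 > 0 \<and> G > 0 \<and> (\<forall>P::real^'d^'d. transpose P = P \<longrightarrow>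
     (\<forall>v. v \<noteq> 0 \<longrightarrow> 0 < v \<bullet> (P *v v)) \<longrightarrow>
     (\<exists>M m j. m \<le> M \<and> (\<forall>i\<in>{i. i < n \<and> x i \<noteq> 0}. m \<le> ln (x i \<bullet> (P *v x i))) \<and>
        j \<in> {i. i < n \<and> x i \<noteq> 0} \<and> ln (x j \<bullet> (P *v x j)) = M \<and>
        (\<forall>i\<in>{i. i < n \<and> x i \<noteq> 0}. gfun \<alpha> b \<beta> n x P \<le>
            A0 + c1 * M - G * (M - m) - exp (\<beta> * (ln (x i \<bullet> (P *v x i)) - ln b)))))"
proof -
  define d where "d = CARD('d)"
  define N where "N = {i. i < n \<and> x i \<noteq> 0}"
  define k where "k = real d - 2 * \<alpha>"
  have k0: "0 < k" using ad by (simp add: k_def d_def)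
  have kd: "k < real d" using a0 by (simp add: k_def)
  have d0: "0 < d" by (simp add: d_def)
  have finN: "finite N" by (simp add: N_def)
  have Nsub: "N \<subseteq> {..<n}" by (auto simp: N_def)
  have cNn: "card N \<le> n" using card_mono[OF _ Nsub] by simp
  have n0: "0 < n"
  proof (rule ccontr)
    assume "\<not> 0 < n" then have "x ` {..<n} = {}" by simp
    with span_empty_not_univ[OF sp] show False by simp
  qed
  have spN: "span (x ` N) = UNIV"
  proof -
    have "x ` {..<n} \<subseteq> insert 0 (x ` N)" by (auto simp: N_def)
    then have "span (x ` {..<n}) \<subseteq> span (insert 0 (x ` N))" by (rule span_mono)
    then show ?thesis using sp by (auto simp: span_insert_0)
  qed
  define Bs where "Bs = bases x N"
  have finBs: "finite Bs" using finN by (simp add: Bs_def bases_finite)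
  have BsNE: "Bs \<noteq> {}" using bases_nonempty[OF spN] by (simp add: Bs_def)
  define eb where "eb B = (SOME e. bij_betw e (UNIV::'d set) B)" for B :: "nat set"
  have ebij: "bij_betw (eb B) UNIV B" if "B \<in> Bs" for B
  proof -
    have "finite B" "card B = CARD('d)" using that bases_fin[of B x N] by (auto simp: Bs_def bases_def)
    then have "\<exists>e. bij_betw e (UNIV::'d set) B" by (intro finite_same_card_bij) auto
    then show ?thesis unfolding eb_def by (rule someI_ex)
  qed
  define Ym where "Ym B = ((\<chi> i j. x (eb B j) $ i) :: real^'d^'d)" for B
  have detnz: "det (Ym B) \<noteq> 0" if "B \<in> Bs" for B
  proof -
    have injx: "inj_on x B" and ind: "independent (x ` B)" using that by (auto simp: Bs_def bases_def)
    have e: "bij_betw (eb B) UNIV B" by (rule ebij[OF that])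
    have "inj_on (x \<circ> eb B) UNIV"
      using comp_inj_on[of "eb B" UNIV x] e injx unfolding bij_betw_def by auto
    then have "inj (\<lambda>j. x (eb B j))" by (simp add: o_def)
    moreover have "range (\<lambda>j. x (eb B j)) = x ` B"
    proof -
      have "x ` range (eb B) = range (\<lambda>j. x (eb B j))" by (simp only: image_image)
      moreover have "range (eb B) = B" using e by (simp add: bij_betw_def)
      ultimately show ?thesis by simp
    qed
    ultimately show ?thesis unfolding Ym_def using ind by (intro indep_det_nz) auto
  qed
  define CB where "CB B = ln (fact d) - ln ((det (Ym B))^2)" for B
  define C0 where "C0 = Max (CB ` Bs)"
  define \<Gamma> where "\<Gamma> = {z \<in> (\<lambda>(r, a). real n * real r - k * real a) ` ({..d} \<times> {..n}). 0 < z}"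
  define \<gamma> where "\<gamma> = Min (insert 1 \<Gamma>)"
  have finG: "finite \<Gamma>" by (simp add: \<Gamma>_def)
  have g0: "0 < \<gamma>" unfolding \<gamma>_def using finG by (subst Min_gr_iff) (auto simp: \<Gamma>_def)
  define A0 where "A0 = real n / 2 * C0"
  define c1 where "c1 = (real n * real d - k * real (card N)) / 2"
  define G where "G = \<gamma> / 2"
  have c10: "0 < c1"
  proof -
    have "k * real (card N) \<le> k * real n" using k0 cNn by simp
    also have "\<dots> < real d * real n" using kd n0 by simp
    finally show ?thesis by (simp add: c1_def mult.commute)
  qed
  have G0: "0 < G" using g0 by (simp add: G_def)
  have main: "\<exists>M m j. m \<le> M \<and> (\<forall>i\<in>{i. i < n \<and> x i \<noteq> 0}. m \<le> ln (x i \<bullet> (P *v x i))) \<and>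
        j \<in> {i. i < n \<and> x i \<noteq> 0} \<and> ln (x j \<bullet> (P *v x j)) = M \<and>
        (\<forall>i\<in>{i. i < n \<and> x i \<noteq> 0}. gfun \<alpha> b \<beta> n x P \<le>
            A0 + c1 * M - G * (M - m) - exp (\<beta> * (ln (x i \<bullet> (P *v x i)) - ln b)))"
    if sym: "transpose P = P" and pd: "\<forall>v. v \<noteq> 0 \<longrightarrow> 0 < v \<bullet> (P *v v)" for P :: "real^'d^'d"
  proof -
    have pd': "\<And>v. v \<noteq> 0 \<Longrightarrow> 0 < v \<bullet> (P *v v)" using pd by blast
    have psd: "\<And>v. 0 \<le> v \<bullet> (P *v v)" using pd' by (case_tac "v = 0") (auto intro: less_imp_le)
    have spdP: "spd P" using sym pd by (simp add: spd_def)
    have detP: "0 < det P" by (rule spd_det_pos[OF spdP])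
    define t where "t i = x i \<bullet> (P *v x i)" for i
    define u where "u i = ln (t i)" for i
    have tpos: "0 < t i" if "i \<in> N" for i using that pd' by (simp add: t_def N_def)
    have "Min (sum u ` Bs) \<in> sum u ` Bs" using finBs BsNE by (intro Min_in) auto
    then obtain B where B: "B \<in> Bs" "sum u B = Min (sum u ` Bs)" by auto
    have minB: "\<And>B'. B' \<in> bases x N \<Longrightarrow> sum u B \<le> sum u B'"
      using B finBs by (auto simp: Bs_def)
    have BB: "B \<in> bases x N" using B by (simp add: Bs_def)
    have finB: "finite B" by (rule bases_fin[OF BB])
    have Bd: "B \<subseteq> N" "card B = d" "inj_on x B" "independent (x ` B)"
      using BB unfolding bases_def d_def by auto
    have BNE: "B \<noteq> {}" using Bd(2) d0 by auto
    have NNE: "N \<noteq> {}" using BNE Bd(1) by auto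
    define m where "m = Min (u ` N)"
    define M where "M = Max (u ` B)"
    have "m \<in> u ` N" using finN NNE by (simp add: m_def)
    then obtain i0 where i0: "i0 \<in> N" "u i0 = m" by auto
    have "M \<in> u ` B" using finB BNE by (simp add: M_def)
    then obtain j where j: "j \<in> B" "u j = M" by auto
    have lowN: "\<forall>i\<in>N. m \<le> u i" using finN by (simp add: m_def)
    have rB: "\<forall>b\<in>B. m \<le> u b \<and> u b \<le> M" using finB lowN Bd(1) by (auto simp: M_def)
    have mM: "m \<le> M" using rB j by auto
    have slope: "\<gamma> \<le> real n * real (card {b\<in>B. u b \<le> \<tau>}) - k * real (card {i\<in>N. u i \<le> \<tau>})"
      if t1: "m \<le> \<tau>" and t2: "\<tau> < M" for \<tau>
    proof -
      define Bt where "Bt = {b\<in>B. u b \<le> \<tau>}"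
      define Nt where "Nt = {i\<in>N. u i \<le> \<tau>}"
      define L where "L = span (x ` Bt)"
      have subN: "Nt \<subseteq> {i. i < n \<and> x i \<in> L}"
      proof
        fix i assume "i \<in> Nt"
        then have "i \<in> N" "u i \<le> \<tau>" by (auto simp: Nt_def)
        then have "x i \<in> L" unfolding L_def Bt_def using exchange[OF BB minB] by blast
        then show "i \<in> {i. i < n \<and> x i \<in> L}" using \<open>i \<in> N\<close> by (simp add: N_def)
      qed
      have BtB: "Bt \<subseteq> B" by (auto simp: Bt_def)
      have finBt: "finite Bt" using finB BtB finite_subset by blast
      have indBt: "independent (x ` Bt)" using Bd(4) BtB by (meson image_mono independent_mono)
      have injBt: "inj_on x Bt" using Bd(3) BtB by (rule inj_on_subset)
      have dimL: "dim L = card Bt"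
        unfolding L_def using dim_span_eq_card_independent[OF indBt] card_image[OF injBt] by simp
      have "i0 \<in> Nt" using i0 t1 by (simp add: Nt_def)
      then have xi0L: "x i0 \<in> L" using subN by auto
      have "Bt \<noteq> {}"
      proof
        assume "Bt = {}"
        then have "L = {0}" by (simp add: L_def)
        then show False using xi0L i0(1) by (simp add: N_def)
      qed
      then have c1': "1 \<le> card Bt" using finBt by (simp add: Suc_le_eq card_gt_0_iff)
      have "j \<notin> Bt" using j t2 by (simp add: Bt_def)
      then have "Bt \<subset> B" using BtB j(1) by auto
      then have c2': "card Bt < d" using psubset_card_mono[OF finB] Bd(2) by simp
      have subL: "subspace L" by (simp add: L_def subspace_span)
      have ineq: "real (card {i. i < n \<and> x i \<in> L}) / real n < real (card Bt) / k"
        using cond[OF subL] dimL c1' c2' by (simp add: k_def d_def)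
      have "card Nt \<le> card {i. i < n \<and> x i \<in> L}" using subN by (intro card_mono) auto
      then have "real (card Nt) / real n < real (card Bt) / k"
        using ineq n0 by (smt (verit) divide_right_mono of_nat_0_less_iff of_nat_le_iff)
      then have lt: "k * real (card Nt) < real n * real (card Bt)"
        using n0 k0 by (simp add: field_simps)
      have cBtd: "card Bt \<le> d" using c2' by simp
      have cNtn: "card Nt \<le> n" using cNn finN by (metis Nt_def card_mono le_trans mem_Collect_eq subsetI)
      have "real n * real (card Bt) - k * real (card Nt) \<in> \<Gamma>"
        unfolding \<Gamma>_def using lt cBtd cNtn by (auto intro!: image_eqI[of _ _ "(card Bt, card Nt)"])
      then have "\<gamma> \<le> real n * real (card Bt) - k * real (card Nt)"
        unfolding \<gamma>_def using finG by (intro Min_le) auto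
      then show ?thesis by (simp add: Bt_def Nt_def)
    qed
    have LC: "(k * real (card N) - real n * real (card B)) * M + \<gamma> * (M - m)
         \<le> k * (\<Sum>i\<in>N. min (u i) M) - real n * (\<Sum>b\<in>B. u b)"
      by (rule layer_cake[OF finN finB mM lowN rB slope])
    have had: "ln (det P) \<le> sum u B + C0"
    proof -
      have e: "bij_betw (eb B) UNIV B" by (rule ebij[OF B(1)])
      have gd: "det P * (det (Ym B))^2 \<le> fact CARD('d) * (\<Prod>j\<in>UNIV. t (eb B j))"
        unfolding Ym_def t_def by (rule gram_det_bound[OF sym psd])
      have pr: "(\<Prod>j\<in>UNIV. t (eb B j)) = (\<Prod>b\<in>B. t b)"
        by (rule prod.reindex_bij_betw[OF e])
      have tB: "\<And>b. b \<in> B \<Longrightarrow> 0 < t b" using tpos Bd(1) by auto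
      have Y2: "0 < (det (Ym B))^2" using detnz[OF B(1)] by simp
      have pp: "0 < (\<Prod>b\<in>B. t b)" using tB by (intro prod_pos) auto
      have "ln (det P * (det (Ym B))^2) \<le> ln (fact d * (\<Prod>b\<in>B. t b))"
        using gd pr detP Y2 pp by (subst ln_le_cancel_iff) (auto simp: d_def)
      moreover have "ln (det P * (det (Ym B))^2) = ln (det P) + ln ((det (Ym B))^2)"
        using detP Y2 by (simp add: ln_mult)
      moreover have "ln (fact d * (\<Prod>b\<in>B. t b)) = ln (fact d) + sum u B"
      proof -
        have "ln (fact d * (\<Prod>b\<in>B. t b)) = ln (fact d) + ln (\<Prod>b\<in>B. t b)"
          using pp by (simp add: ln_mult)
        also have "ln (\<Prod>b\<in>B. t b) = (\<Sum>b\<in>B. ln (t b))"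
          using tB finB by (intro ln_prod) (auto, metis less_irrefl)
        finally show ?thesis by (simp add: u_def)
      qed
      ultimately have "ln (det P) \<le> sum u B + CB B" by (simp add: CB_def)
      moreover have "CB B \<le> C0" unfolding C0_def using finBs B(1) by (intro Max_ge) auto
      ultimately show ?thesis by simp
    qed
    have geq: "gfun \<alpha> b \<beta> n x P = real n / 2 * ln (det P)
       + (\<Sum>i\<in>N. (\<alpha> - real CARD('d) / 2) * u i - exp (\<beta> * (u i - ln b)))"
      unfolding N_def u_def t_def by (rule gfun_eq[OF pd' b0])
    have "ln (x j \<bullet> (P *v x j)) = M" using j by (simp add: u_def t_def)
    moreover have "\<forall>i\<in>N. m \<le> ln (x i \<bullet> (P *v x i))" using lowN by (simp add: u_def t_def)
    moreover have "\<forall>i\<in>N. gfun \<alpha> b \<beta> n x P \<le> A0 + c1 * M - G * (M - m) - exp (\<beta> * (ln (x i \<bullet> (P *v x i)) - ln b))"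
    proof
      fix i1 assume i1: "i1 \<in> N"
      define SE where "SE = (\<Sum>i\<in>N. exp (\<beta> * (u i - ln b)))"
      define SU where "SU = (\<Sum>i\<in>N. u i)"
      define SM where "SM = (\<Sum>i\<in>N. min (u i) M)"
      define SB where "SB = sum u B"
      have s1: "(\<Sum>i\<in>N. (\<alpha> - real CARD('d) / 2) * u i - exp (\<beta> * (u i - ln b)))
          = - (k / 2) * SU - SE"
      proof -
        have "(\<Sum>i\<in>N. (\<alpha> - real CARD('d) / 2) * u i - exp (\<beta> * (u i - ln b)))
            = (\<alpha> - real CARD('d) / 2) * SU - SE"
          by (simp only: SU_def SE_def sum_subtractf sum_distrib_left)
        moreover have "(\<alpha> - real CARD('d) / 2) = - (k / 2)" by (simp add: k_def d_def field_simps)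
        ultimately show ?thesis by simp
      qed
      have s2: "exp (\<beta> * (u i1 - ln b)) \<le> SE"
        unfolding SE_def using finN i1 by (intro member_le_sum) auto
      have s3: "SM \<le> SU" unfolding SM_def SU_def by (intro sum_mono) auto
      have s4: "real n / 2 * ln (det P) \<le> real n / 2 * (SB + C0)"
        using had by (intro mult_left_mono) (auto simp: SB_def)
      have LC': "(k * real (card N) - real n * real d) * M + \<gamma> * (M - m) \<le> k * SM - real n * SB"
        using LC Bd(2) by (simp add: SM_def SB_def)
      have "gfun \<alpha> b \<beta> n x P = real n / 2 * ln (det P) - (k / 2) * SU - SE" using geq s1 by simp
      also have "\<dots> \<le> real n / 2 * (SB + C0) - (k / 2) * SM - exp (\<beta> * (u i1 - ln b))"
      proof -
        have "k / 2 * SM \<le> k / 2 * SU" using s3 k0 by (intro mult_left_mono) auto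
        then show ?thesis using s2 s4 by linarith
      qed
      also have "\<dots> \<le> A0 + c1 * M - G * (M - m) - exp (\<beta> * (u i1 - ln b))"
        using LC' by (simp add: A0_def c1_def G_def algebra_simps) argo
      finally show "gfun \<alpha> b \<beta> n x P \<le> A0 + c1 * M - G * (M - m) - exp (\<beta> * (ln (x i1 \<bullet> (P *v x i1)) - ln b))"
        by (simp add: u_def t_def)
    qed
    ultimately show "\<exists>M m j. m \<le> M \<and> (\<forall>i\<in>{i. i < n \<and> x i \<noteq> 0}. m \<le> ln (x i \<bullet> (P *v x i))) \<and>
        j \<in> {i. i < n \<and> x i \<noteq> 0} \<and> ln (x j \<bullet> (P *v x j)) = M \<and>
        (\<forall>i\<in>{i. i < n \<and> x i \<noteq> 0}. gfun \<alpha> b \<beta> n x P \<le>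
            A0 + c1 * M - G * (M - m) - exp (\<beta> * (ln (x i \<bullet> (P *v x i)) - ln b)))"
      using mM j Bd(1) unfolding N_def by blast
  qed
  show ?thesis using main c10 G0 by blast
qed


lemma cont_qf: "continuous_on UNIV (\<lambda>P::real^'d^'d. v \<bullet> (P *v v))"
  unfolding inner_vec_def matrix_vector_mult_def
  by (simp add: continuous_intros continuous_on_component continuous_on_id)

lemma cont_entry: "continuous_on UNIV (\<lambda>P::real^'d^'d. P $ i $ j)"
  by (intro continuous_on_component continuous_on_id)

lemma transpose_eq_iff: "transpose (P::real^'d^'d) = P \<longleftrightarrow> (\<forall>i j. P$i$j = P$j$i)"
  by (auto simp: vec_eq_iff transpose_def)

lemma K_compact:
  "compact {P::real^'d^'d. transpose P = P \<and> (\<forall>v. 0 \<le> v \<bullet> (P *v v)) \<and> (\<forall>i j. \<bar>P$i$j\<bar> \<le> R) \<and> \<delta> \<le> det P}"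
proof -
  define K where "K = {P::real^'d^'d. transpose P = P \<and> (\<forall>v. 0 \<le> v \<bullet> (P *v v)) \<and> (\<forall>i j. \<bar>P$i$j\<bar> \<le> R) \<and> \<delta> \<le> det P}"
  have K': "K = {P::real^'d^'d. (\<forall>i j. P$i$j = P$j$i) \<and> (\<forall>v. 0 \<le> v \<bullet> (P *v v)) \<and> (\<forall>i j. \<bar>P$i$j\<bar> \<le> R) \<and> \<delta> \<le> det P}"
    unfolding K_def transpose_eq_iff ..
  have "closed K"
    unfolding K'
    by (intro closed_Collect_conj closed_Collect_all closed_Collect_eq closed_Collect_le
        cont_entry cont_qf continuous_det continuous_on_const continuous_intros)
  moreover have "bounded K"
  proof -
    have "norm P \<le> real CARD('d) * (real CARD('d) * R)" if "P \<in> K" for P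
    proof -
      have "norm P \<le> (\<Sum>i\<in>UNIV. norm (P $ i))" unfolding norm_vec_def by (rule L2_set_le_sum) auto
      also have "\<dots> \<le> (\<Sum>i\<in>(UNIV::'d set). real CARD('d) * R)"
      proof (rule sum_mono)
        fix i
        have "norm (P $ i) \<le> (\<Sum>j\<in>UNIV. \<bar>P$i$j\<bar>)" by (rule norm_le_l1_cart)
        also have "\<dots> \<le> (\<Sum>j\<in>(UNIV::'d set). R)" using that by (intro sum_mono) (auto simp: K_def)
        finally show "norm (P $ i) \<le> real CARD('d) * R" by simp
      qed
      finally show ?thesis by simp
    qed
    then show ?thesis unfolding bounded_iff by blast
  qed
  ultimately show ?thesis unfolding K_def by (simp add: compact_eq_bounded_closed)
qed


theorem theorem45:
  fixes \<alpha> b \<beta> :: real and n :: nat and x :: "nat \<Rightarrow> real^'d"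
  assumes "\<alpha> > 0" and "b > 0" and "\<beta> > 0"
    and "\<alpha> < real CARD('d) / 2"
    and "span (x ` {..<n}) = UNIV"
    and "\<And>L :: (real^'d) set. subspace L \<Longrightarrow> 1 \<le> dim L \<Longrightarrow> dim L < CARD('d) \<Longrightarrow>
           real (card {i. i < n \<and> x i \<in> L}) / real n < real (dim L) / (real CARD('d) - 2 * \<alpha>)"
  shows "\<exists>S. spd S \<and> (\<forall>T. spd T \<longrightarrow> kotz_loglik \<alpha> b \<beta> n x T \<le> kotz_loglik \<alpha> b \<beta> n x S)"
proof -
  note a0 = assms(1) and b0 = assms(2) and \<beta>0 = assms(3) and ad = assms(4) and sp = assms(5)
  define N where "N = {i. i < n \<and> x i \<noteq> 0}"
  define g where "g = gfun \<alpha> b \<beta> n x"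
  define c where "c = g (mat 1)"
  obtain A0 c1 G where c10: "c1 > 0" and G0: "G > 0" and
    keyP: "\<And>P::real^'d^'d. transpose P = P \<Longrightarrow> (\<forall>v. v \<noteq> 0 \<longrightarrow> 0 < v \<bullet> (P *v v)) \<Longrightarrow>
     (\<exists>M m j. m \<le> M \<and> (\<forall>i\<in>N. m \<le> ln (x i \<bullet> (P *v x i))) \<and>
        j \<in> N \<and> ln (x j \<bullet> (P *v x j)) = M \<and>
        (\<forall>i\<in>N. g P \<le> A0 + c1 * M - G * (M - m) - exp (\<beta> * (ln (x i \<bullet> (P *v x i)) - ln b))))"
    using key[OF assms] unfolding N_def g_def by blast
  obtain L U where LU: "\<And>(u::nat\<Rightarrow>real) N M m j. m \<le> M \<and> (\<forall>i\<in>N. m \<le> u i) \<and> j \<in> N \<and> u j = M \<and>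
      (\<forall>i\<in>N. c \<le> A0 + c1 * M - G * (M - m) - exp (\<beta> * (u i - ln b)))
      \<Longrightarrow> (\<forall>i\<in>N. L \<le> u i \<and> u i \<le> U)"
    using numeric[OF c10 G0 \<beta>0 b0, of c A0] by blast
  have n0: "0 < n"
  proof (rule ccontr)
    assume "\<not> 0 < n" then have "x ` {..<n} = {}" by simp
    with span_empty_not_univ[OF sp] show False by simp
  qed
  obtain Kc where Kc0: "Kc \<ge> 0" and Kc: "\<And>(P::real^'d^'d) T. transpose P = P \<Longrightarrow> (\<forall>v. 0 \<le> v \<bullet> (P *v v)) \<Longrightarrow>
            (\<forall>v\<in>x ` {..<n}. v \<bullet> (P *v v) \<le> T) \<Longrightarrow> (\<forall>j l. \<bar>P$j$l\<bar> \<le> Kc * T)"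
    using entries_bound[OF _ sp] by blast
  define lb where "lb = (2 / real n) * (c - real (card N) * ((\<alpha> - real CARD('d) / 2) * L))"
  define R where "R = max 1 (Kc * exp U)"
  define \<delta> where "\<delta> = min 1 (exp lb)"
  have \<delta>0: "0 < \<delta>" by (simp add: \<delta>_def)
  define K where "K = {P::real^'d^'d. transpose P = P \<and> (\<forall>v. 0 \<le> v \<bullet> (P *v v)) \<and> (\<forall>i j. \<bar>P$i$j\<bar> \<le> R) \<and> \<delta> \<le> det P}"
  have compK: "compact K" unfolding K_def by (rule K_compact)
  have Kpd: "0 < v \<bullet> (P *v v)" if "P \<in> K" "v \<noteq> 0" for P v
  proof (rule ccontr)
    assume "\<not> 0 < v \<bullet> (P *v v)"
    moreover have sym: "transpose P = P" and psd: "\<And>v. 0 \<le> v \<bullet> (P *v v)" and dP: "\<delta> \<le> det P"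
      using that by (auto simp: K_def)
    ultimately have "v \<bullet> (P *v v) = 0" by (meson order_antisym not_less)
    then have "P *v v = 0" by (rule psd_zero_imp[OF sym psd])
    moreover have "invertible P" using dP \<delta>0 by (simp add: invertible_det_nz)
    ultimately have "v = 0" by (rule invertible_ker[rotated])
    with that show False by simp
  qed
  have Kspd: "spd P" if "P \<in> K" for P using that Kpd by (auto simp: K_def spd_def)
  have I_K: "mat 1 \<in> K"
  proof -
    have "\<bar>(mat 1 :: real^'d^'d) $ i $ j\<bar> \<le> R" for i j
      by (simp add: mat_def R_def le_max_iff_disj)
    moreover have "0 \<le> v \<bullet> (mat 1 *v v)" for v :: "real^'d" by simp
    ultimately show ?thesis by (simp add: K_def transpose_mat \<delta>_def)
  qed
  have Kdet: "0 < det P" if "P \<in> K" for P using that \<delta>0 by (auto simp: K_def)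
  have geqK: "g P = real n / 2 * ln (det P)
     + (\<Sum>i\<in>N. (\<alpha> - real CARD('d) / 2) * ln (x i \<bullet> (P *v x i))
          - exp (\<beta> * (ln (x i \<bullet> (P *v x i)) - ln b)))" if "P \<in> K" for P
    unfolding g_def N_def using Kpd[OF that] b0 by (intro gfun_eq) auto
  have contg: "continuous_on K g"
  proof -
    define qf where "qf i = (\<lambda>P::real^'d^'d. x i \<bullet> (P *v x i))" for i
    have cd: "continuous_on K det" using continuous_det continuous_on_subset by blast
    have cq: "continuous_on K (qf i)" for i
      unfolding qf_def using cont_qf continuous_on_subset by blast
    have qpos: "qf i P \<noteq> 0" if "i \<in> N" "P \<in> K" for i P
      using Kpd[OF that(2)] that(1) by (auto simp: N_def qf_def intro!: less_imp_neq[symmetric])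
    have dpos: "det P \<noteq> 0" if "P \<in> K" for P using Kdet[OF that] by simp
    have "continuous_on K (\<lambda>P. real n / 2 * ln (det P)
     + (\<Sum>i\<in>N. (\<alpha> - real CARD('d) / 2) * ln (qf i P)
          - exp (\<beta> * (ln (qf i P) - ln b))))"
      by (intro continuous_intros cd cq) (use dpos qpos in blast)+
    then show ?thesis by (rule continuous_on_eq) (simp add: geqK qf_def)
  qed
  obtain Ps where Ps: "Ps \<in> K" and Pmax: "\<And>P. P \<in> K \<Longrightarrow> g P \<le> g Ps"
    using continuous_attains_sup[OF compK _ contg] I_K by blast
  have inK: "P \<in> K" if spP: "spd P" and gP: "c \<le> g P" for P
  proof -
    have sym: "transpose P = P" and pd: "\<forall>v. v \<noteq> 0 \<longrightarrow> 0 < v \<bullet> (P *v v)"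
      using spP by (auto simp: spd_def)
    have psd: "\<forall>v. 0 \<le> v \<bullet> (P *v v)" using pd by (metis order_refl less_imp_le inner_zero_left matrix_vector_mult_0_right)
    define u where "u i = ln (x i \<bullet> (P *v x i))" for i
    obtain M m j where H: "m \<le> M" "\<forall>i\<in>N. m \<le> u i" "j \<in> N" "u j = M"
      "\<forall>i\<in>N. g P \<le> A0 + c1 * M - G * (M - m) - exp (\<beta> * (u i - ln b))"
      using keyP[OF sym pd] unfolding u_def by blast
    have "\<forall>i\<in>N. c \<le> A0 + c1 * M - G * (M - m) - exp (\<beta> * (u i - ln b))" using H(5) gP by force
    then have bnd: "\<forall>i\<in>N. L \<le> u i \<and> u i \<le> U" using LU[of m M N u j] H by blast
    have tpos: "0 < x i \<bullet> (P *v x i)" if "i \<in> N" for i using that pd by (auto simp: N_def)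
    have "\<forall>v\<in>x ` {..<n}. v \<bullet> (P *v v) \<le> exp U"
    proof
      fix v assume "v \<in> x ` {..<n}"
      then obtain i where i: "i < n" "v = x i" by auto
      show "v \<bullet> (P *v v) \<le> exp U"
      proof (cases "x i = 0")
        case True then show ?thesis using i by simp
      next
        case False
        then have iN: "i \<in> N" using i by (simp add: N_def)
        have "v \<bullet> (P *v v) = exp (u i)" using tpos[OF iN] i by (simp add: u_def)
        also have "\<dots> \<le> exp U" using bnd iN by simp
        finally show ?thesis .
      qed
    qed
    then have ent: "\<forall>j l. \<bar>P$j$l\<bar> \<le> Kc * exp U" using Kc[OF sym psd] by blast
    have dP: "0 < det P" by (rule spd_det_pos[OF spP])
    have geq: "g P = real n / 2 * ln (det P)
       + (\<Sum>i\<in>N. (\<alpha> - real CARD('d) / 2) * u i - exp (\<beta> * (u i - ln b)))"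
      unfolding g_def N_def u_def using pd b0 by (intro gfun_eq) auto
    have neg: "\<alpha> - real CARD('d) / 2 \<le> 0" using ad by simp
    have "(\<Sum>i\<in>N. (\<alpha> - real CARD('d) / 2) * u i - exp (\<beta> * (u i - ln b)))
        \<le> (\<Sum>i\<in>N. (\<alpha> - real CARD('d) / 2) * L)"
    proof (rule sum_mono)
      fix i assume "i \<in> N"
      then have "(\<alpha> - real CARD('d) / 2) * u i \<le> (\<alpha> - real CARD('d) / 2) * L"
        using bnd neg by (intro mult_left_mono_neg) auto
      moreover have "0 < exp (\<beta> * (u i - ln b))" by simp
      ultimately show "(\<alpha> - real CARD('d) / 2) * u i - exp (\<beta> * (u i - ln b)) \<le> (\<alpha> - real CARD('d) / 2) * L"
        by linarith
    qed
    also have "\<dots> = real (card N) * ((\<alpha> - real CARD('d) / 2) * L)" by simp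
    finally have "c \<le> real n / 2 * ln (det P) + real (card N) * ((\<alpha> - real CARD('d) / 2) * L)"
      using gP geq by linarith
    then have "lb \<le> ln (det P)" using n0 by (simp add: lb_def field_simps)
    then have "exp lb \<le> det P" using dP by (metis exp_le_cancel_iff exp_ln)
    then have "\<delta> \<le> det P" by (simp add: \<delta>_def)
    moreover have "\<forall>i j. \<bar>P$i$j\<bar> \<le> R" using ent unfolding R_def by (meson le_max_iff_disj)
    ultimately show ?thesis using sym psd by (simp add: K_def)
  qed
  define Sm where "Sm = matrix_inv Ps"
  have spdPs: "spd Ps" by (rule Kspd[OF Ps])
  have spdS: "spd Sm" unfolding Sm_def by (rule spd_inv(3)[OF spdPs])
  have invS: "matrix_inv Sm = Ps" unfolding Sm_def by (rule spd_inv(5)[OF spdPs])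
  have "kotz_loglik \<alpha> b \<beta> n x T \<le> kotz_loglik \<alpha> b \<beta> n x Sm" if spT: "spd T" for T
  proof -
    define Q where "Q = matrix_inv T"
    have spQ: "spd Q" unfolding Q_def by (rule spd_inv(3)[OF spT])
    have "g Q \<le> g Ps"
    proof (cases "c \<le> g Q")
      case True then show ?thesis using inK[OF spQ] Pmax by blast
    next
      case False then show ?thesis using Pmax[OF I_K] by (simp add: c_def)
    qed
    then show ?thesis using loglik_eq[OF spT] loglik_eq[OF spdS] invS
      by (simp add: g_def Q_def)
  qed
  then show ?thesis using spdS by blast
qed

end
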